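(* For every $n\ge 1$, \[ |\mathrm{End}(P_n)| = \begin{cases} (n+1)2^{n-1} - (2n-1)\binom{n-1}{(n-1)/2} & \text{if } n \text{ is odd},\\[2pt] (n+1)2^{n-1} - n\binom{n}{n/2} & \text{if } n \text{ is even}.\end{cases} \]
   Context: For a positive integer $n$, $P_n$ denotes the path with vertex set $[n]=\{1,\dots,n\}$ in which $i$ and $j$ are adjacent iff $|i-j|=1$. $\mathrm{End}(P_n)$ is the set of endomorphisms of $P_n$, i.e. maps $f:[n]\to[n]$ with $|f(i)-f(i+1)|=1$ for all $1\le i\le n-1$. *)

theory Defs
  imports Main "HOL-Library.FuncSet"
begin

text \<open>Endomorphisms of the path P_n on vertex set {1..n}: maps f from {1..n} to {1..n}
  (represented extensionally, i.e. f is undefined outside {1..n}) with |f(i) - f(i+1)| = 1.\<close>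
definition path_End :: "nat \<Rightarrow> (nat \<Rightarrow> nat) set" where
  "path_End n = {f \<in> {1..n} \<rightarrow>\<^sub>E {1..n}.
      \<forall>i. 1 \<le> i \<and> i \<le> n - 1 \<longrightarrow> \<bar>int (f i) - int (f (i + 1))\<bar> = 1}"

end

theory Submission
  imports Defs
begin

fun mx :: "int list \<Rightarrow> int" where
  "mx [] = 0" | "mx (x#xs) = max 0 (x + mx xs)"
fun mn :: "int list \<Rightarrow> int" where
  "mn [] = 0" | "mn (x#xs) = min 0 (x + mn xs)"

definition S :: "nat \<Rightarrow> int list set" where
  "S m = {xs. set xs \<subseteq> {-1,1} \<and> length xs = m}"

lemma finite_S: "finite (S m)"
  unfolding S_def by (rule finite_lists_length_eq) auto

lemma S_0: "S 0 = {[]}" unfolding S_def by auto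

lemma S_Suc: "S (Suc m) = Cons 1 ` S m \<union> Cons (-1) ` S m"
  unfolding S_def by (auto simp: length_Suc_conv)

lemma sum_S_Suc: "sum f (S (Suc m)) = (\<Sum>xs\<in>S m. f (1#xs) + f ((-1)#xs))"
proof -
  have d: "Cons 1 ` S m \<inter> Cons (-1) ` S m = {}" by auto
  have "sum f (S (Suc m)) = sum f (Cons 1 ` S m) + sum f (Cons (-1) ` S m)"
    unfolding S_Suc by (rule sum.union_disjoint) (auto simp: finite_S)
  also have "\<dots> = (\<Sum>xs\<in>S m. f (1#xs)) + (\<Sum>xs\<in>S m. f ((-1)#xs))"
    by (subst sum.reindex, simp add: inj_on_def, subst sum.reindex, simp add: inj_on_def, simp)
  finally show ?thesis by (simp add: sum.distrib)
qed

lemma sum_S_neg: "sum f (S m) = (\<Sum>xs\<in>S m. f (map uminus xs))"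
proof (induction m arbitrary: f)
  case 0 then show ?case by (simp add: S_0)
next
  case (Suc m)
  have "sum f (S (Suc m)) = (\<Sum>xs\<in>S m. f (1#xs) + f ((-1)#xs))" by (rule sum_S_Suc)
  also have "\<dots> = (\<Sum>xs\<in>S m. f (1#map uminus xs) + f ((-1)#map uminus xs))"
    by (rule Suc.IH)
  also have "\<dots> = (\<Sum>xs\<in>S (Suc m). f (map uminus xs))"
    by (simp add: sum_S_Suc add.commute)
  finally show ?case .
qed

lemma card_S: "(\<Sum>xs\<in>S m. (1::int)) = 2^m"
proof (induction m)
  case 0 then show ?case by (simp add: S_0)
next
  case (Suc m)
  have "(\<Sum>xs\<in>S (Suc m). (1::int)) = (\<Sum>xs\<in>S m. 1 + 1)" by (rule sum_S_Suc)
  also have "\<dots> = 2 * (\<Sum>xs\<in>S m. (1::int))" by (simp only: sum.distrib)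
  finally show ?case using Suc by simp
qed

lemma mx_ge0: "mx xs \<ge> 0" by (cases xs) auto
lemma mn_le0: "mn xs \<le> 0" by (cases xs) auto
lemma mn_neg: "mn xs = - mx (map uminus xs)"
  by (induction xs) auto

lemma range_le: "\<forall>x\<in>set xs. \<bar>x\<bar> \<le> 1 \<Longrightarrow> mx xs - mn xs \<le> int (length xs)"
proof (induction xs)
  case Nil then show ?case by simp
next
  case (Cons x xs)
  have "mx xs \<ge> 0" "mn xs \<le> 0" by (rule mx_ge0, rule mn_le0)
  with Cons show ?case by auto
qed

definition Nc :: "nat \<Rightarrow> nat \<Rightarrow> nat" where
  "Nc m k = (\<Sum>xs\<in>S m. if mx xs = int k then 1 else 0)"

lemma Nc_formula: "Nc m k = m choose ((m + k + 1) div 2)"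
proof (induction m arbitrary: k)
  case 0 then show ?case by (simp add: Nc_def S_0)
next
  case (Suc m)
  show ?case
  proof (cases k)
    case 0
    have "Nc (Suc m) k = (\<Sum>xs\<in>S m. (if mx xs = 0 then 1 else 0) + (if mx xs = 1 then 1 else 0))"
      unfolding Nc_def sum_S_Suc 0
      apply (rule sum.cong, simp) subgoal for xs using mx_ge0[of xs] by (auto simp: max_def) done
    also have "\<dots> = Nc m 0 + Nc m 1" by (simp add: Nc_def sum.distrib)
    also have "\<dots> = (m choose ((m+1) div 2)) + (m choose ((m+2) div 2))" by (simp add: Suc.IH)
    also have "m choose ((m+1) div 2) = m choose (m div 2)"
    proof (cases "even m")
      case True then show ?thesis proof - have "(m+1) div 2 = m div 2" using True by presburger then show ?thesis by simp qed
    next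
      case False
      then have "(m+1) div 2 = m - m div 2" by presburger
      then show ?thesis using binomial_symmetric[of "m div 2" m] by simp
    qed
    also have "(m+2) div 2 = Suc (m div 2)" by simp
    also have "(m choose (m div 2)) + (m choose Suc (m div 2)) = (Suc m choose Suc (m div 2))" by simp
    finally show ?thesis using 0 by simp
  next
    case (Suc k')
    have "Nc (Suc m) k = (\<Sum>xs\<in>S m. (if mx xs = int k' then 1 else 0) + (if mx xs = int k' + 2 then 1 else 0))"
      unfolding Nc_def sum_S_Suc Suc
      apply (rule sum.cong, simp) subgoal for xs using mx_ge0[of xs] by (auto simp: max_def) done
    also have "\<dots> = Nc m k' + Nc m (k'+2)" by (simp add: Nc_def sum.distrib add.commute)
    also have "\<dots> = (m choose ((m+k'+1) div 2)) + (m choose Suc ((m+k'+1) div 2))"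
      by (simp add: Suc.IH)
    also have "\<dots> = Suc m choose Suc ((m+k'+1) div 2)" by simp
    finally show ?thesis using Suc by simp
  qed
qed

definition D :: "nat \<Rightarrow> int" where "D m = (\<Sum>xs\<in>S m. mx xs)"

lemma D_Suc: "D (Suc m) = 2 * D m + int (Nc m 0)"
proof -
  have "D (Suc m) = (\<Sum>xs\<in>S m. 2 * mx xs + (if mx xs = 0 then 1 else 0))"
    unfolding D_def sum_S_Suc apply (rule sum.cong, simp) subgoal for xs using mx_ge0[of xs] by (auto simp: max_def) done
  moreover have "int (Nc m 0) = (\<Sum>xs\<in>S m. if mx xs = 0 then 1 else 0)"
    unfolding Nc_def of_nat_sum by (rule sum.cong) auto
  ultimately show ?thesis by (simp add: D_def sum.distrib sum_distrib_left)
qed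

lemma B1: "(2*j+2) choose (j+1) = 2 * ((2*j+1) choose (j+1))"
proof -
  have "(2*j+1) choose j = (2*j+1) choose (j+1)"
    using binomial_symmetric[of j "2*j+1"] by simp
  moreover have "(2*j+2) choose (j+1) = ((2*j+1) choose j) + ((2*j+1) choose (j+1))"
    using binomial_Suc_Suc[of "2*j+1" j] by simp
  ultimately show ?thesis by simp
qed

lemma B2: "(j+1) * ((2*j+1) choose (j+1)) = (2*j+1) * ((2*j) choose j)"
  using Suc_times_binomial[of j "2*j"] by simp

definition F :: "nat \<Rightarrow> int" where "F m = 2 * D m + 2^m"

lemma F_Suc: "F (Suc m) = 2 * F m + 2 * int (m choose ((m+1) div 2))"
  unfolding F_def D_Suc Nc_formula by simp

lemma F_formula: "F (2*j) = int ((4*j+1) * ((2*j) choose j)) \<and>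
   F (2*j+1) = int ((2*j+2) * ((2*j+2) choose (j+1)))"
proof (induction j)
  case 0
  have "F 0 = 1" by (simp add: F_def D_def S_0)
  then show ?case using F_Suc[of 0] by simp
next
  case (Suc j)
  have e1: "F (2*j+1) = int ((2*j+2) * ((2*j+2) choose (j+1)))" using Suc by simp
  have b1: "int ((2*j+2) choose (j+1)) = 2 * int ((2*j+1) choose (j+1))"
    using B1[of j] by simp
  have "F (2*j+2) = 2 * F (2*j+1) + 2 * int ((2*j+1) choose (j+1))"
    using F_Suc[of "2*j+1"] by simp
  also have "\<dots> = (4*int j+5) * int ((2*j+2) choose (j+1))"
    unfolding e1 of_nat_mult b1 by (simp add: algebra_simps)
  finally have A: "F (2*j+2) = (4*int j+5) * int ((2*j+2) choose (j+1))" .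
  have q: "2*(j+1)+1 = 2*j+3" "j+1+1 = j+2" "2*(j+1) = 2*j+2" "2*(j+1)+2 = 2*j+4" "2*j+2+1 = 2*j+3" "2*j+2+2 = 2*j+4" by simp_all
  have b2n: "(j+2) * ((2*j+3) choose (j+2)) = (2*j+3) * ((2*j+2) choose (j+1))"
    using B2[of "j+1"] unfolding q .
  have b2: "(int j+2) * int ((2*j+3) choose (j+2)) = (2*int j+3) * int ((2*j+2) choose (j+1))"
    using arg_cong[OF b2n, of int] by (simp only: of_nat_mult of_nat_add of_nat_numeral)
  have b1n: "(2*j+4) choose (j+2) = 2 * ((2*j+3) choose (j+2))"
    using B1[of "j+1"] unfolding q .
  have b1': "int ((2*j+4) choose (j+2)) = 2 * int ((2*j+3) choose (j+2))"
    unfolding b1n by simp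
  have "F (2*j+3) = 2 * F (2*j+2) + 2 * int ((2*j+2) choose (j+1))"
  proof -
    have d: "(2*j+2+1) div 2 = j+1" "2*j+3 = Suc (2*j+2)" by simp_all
    show ?thesis unfolding d(2) F_Suc d(1) ..
  qed
  also have "\<dots> = 4 * ((2*int j+3) * int ((2*j+2) choose (j+1)))" unfolding A by (simp add: algebra_simps)
  also have "\<dots> = 4 * ((int j+2) * int ((2*j+3) choose (j+2)))" using b2 by simp
  also have "\<dots> = (2*int j+4) * int ((2*j+4) choose (j+2))" unfolding b1' by (simp add: algebra_simps)
  finally have B: "F (2*j+3) = (2*int j+4) * int ((2*j+4) choose (j+2))" .
  have r: "2 * Suc j = 2*j+2" "2*Suc j + 1 = 2*j+3" "2*Suc j + 2 = 2*j+4" "Suc j + 1 = j+2" "Suc j = j+1" by simp_all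
  have C1: "int ((4*Suc j+1) * ((2*Suc j) choose Suc j)) = (4*int j+5) * int ((2*j+2) choose (j+1))"
    unfolding r(1) r(5) by (simp only: of_nat_mult of_nat_add of_nat_numeral of_nat_1) (simp add: algebra_simps)
  have C2: "int ((2*Suc j+2) * ((2*Suc j+2) choose (Suc j+1))) = (2*int j+4) * int ((2*j+4) choose (j+2))"
    unfolding r(3,4) by (simp only: of_nat_mult of_nat_add of_nat_numeral)
  have r6: "2*j+2+1 = 2*j+3" by simp
  show ?case unfolding C1 C2 unfolding r(2) unfolding r(1) r6 using A B by (rule conjI)
qed

fun walk :: "int \<Rightarrow> int list \<Rightarrow> int list" where
  "walk s [] = [s]" | "walk s (x#xs) = s # walk (s+x) xs"
fun adj :: "int list \<Rightarrow> bool" where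
  "adj (x#y#r) = (\<bar>x-y\<bar> = 1 \<and> adj (y#r))" | "adj _ = True"
fun dif :: "int list \<Rightarrow> int list" where
  "dif (x#y#r) = (y - x) # dif (y#r)" | "dif _ = []"

lemma walk_hd: "\<exists>r. walk s xs = s # r" by (cases xs) auto

lemma length_walk: "length (walk s xs) = Suc (length xs)"
  by (induction xs arbitrary: s) auto

lemma walk_set: "set (walk s xs) \<subseteq> {a..b} \<longleftrightarrow> a \<le> s + mn xs \<and> s + mx xs \<le> b"
proof (induction xs arbitrary: s)
  case Nil then show ?case by auto
next
  case (Cons x xs)
  have "set (walk s (x#xs)) \<subseteq> {a..b} \<longleftrightarrow> s \<in> {a..b} \<and> set (walk (s+x) xs) \<subseteq> {a..b}" by simp
  also have "\<dots> \<longleftrightarrow> a \<le> s + mn (x#xs) \<and> s + mx (x#xs) \<le> b"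
    unfolding Cons.IH by auto
  finally show ?case .
qed

lemma walk_adj: "set xs \<subseteq> {-1,1} \<Longrightarrow> adj (walk s xs)"
proof (induction xs arbitrary: s)
  case Nil then show ?case by simp
next
  case (Cons x xs)
  obtain r where "walk (s+x) xs = (s+x) # r" using walk_hd by blast
  moreover have "adj (walk (s+x) xs)" using Cons by simp
  ultimately show ?case using Cons.prems by auto
qed

lemma walk_inj: "walk s xs = walk s' ys \<Longrightarrow> s = s' \<and> xs = ys"
proof (induction xs arbitrary: s s' ys)
  case Nil then show ?case by (cases ys) (auto dest: arg_cong[of _ _ length] simp: length_walk)
next
  case (Cons x xs)
  then obtain y ys' where ys: "ys = y # ys'" by (cases ys) (auto dest: arg_cong[of _ _ length] simp: length_walk)
  with Cons.prems have "s = s'" "walk (s+x) xs = walk (s'+y) ys'" by auto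
  with Cons.IH[of "s+x" "s'+y" ys'] ys show ?case by auto
qed

lemma dif_walk: "adj ws \<Longrightarrow> ws \<noteq> [] \<Longrightarrow> walk (hd ws) (dif ws) = ws \<and> set (dif ws) \<subseteq> {-1,1} \<and> length (dif ws) = length ws - 1"
proof (induction ws rule: dif.induct)
  case (1 x y r)
  then show ?case by (auto simp: abs_if split: if_splits)
next
  case ("2_1") then show ?case by simp
next
  case ("2_2" v) then show ?case by simp
qed

lemma adj_nth: "adj ws \<longleftrightarrow> (\<forall>i. Suc i < length ws \<longrightarrow> \<bar>ws!i - ws!Suc i\<bar> = 1)"
proof (induction ws rule: adj.induct)
  case (1 x y r)
  show ?case
  proof
    assume "adj (x#y#r)"
    then show "\<forall>i. Suc i < length (x#y#r) \<longrightarrow> \<bar>(x#y#r)!i - (x#y#r)!Suc i\<bar> = 1"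
      using 1 by (auto simp: nth_Cons split: nat.splits)
  next
    assume a: "\<forall>i. Suc i < length (x#y#r) \<longrightarrow> \<bar>(x#y#r)!i - (x#y#r)!Suc i\<bar> = 1"
    have "\<bar>x - y\<bar> = 1" using a[rule_format, of 0] by simp
    moreover have "adj (y#r)" unfolding 1
    proof (intro allI impI)
      fix i assume "Suc i < length (y#r)"
      then show "\<bar>(y#r)!i - (y#r)!Suc i\<bar> = 1" using a[rule_format, of "Suc i"] by simp
    qed
    ultimately show "adj (x#y#r)" by simp
  qed
qed auto

lemma phi_nth: "1 \<le> i \<Longrightarrow> i \<le> n \<Longrightarrow> map (\<lambda>i. int (f i)) [1..<Suc n] ! (i-1) = int (f i)"
proof -
  assume "1 \<le> i" "i \<le> n"
  then have "i - 1 < length [1..<Suc n]" by simp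
  then have "map (\<lambda>i. int (f i)) [1..<Suc n] ! (i-1) = int (f ([1..<Suc n] ! (i-1)))" by (rule nth_map)
  also have "[1..<Suc n] ! (i-1) = i" using \<open>1 \<le> i\<close> \<open>i \<le> n\<close> by (subst nth_upt) auto
  finally show ?thesis .
qed

definition W :: "nat \<Rightarrow> int list set" where
  "W n = {ws. length ws = n \<and> set ws \<subseteq> {1..int n} \<and> adj ws}"

lemma card_path_End_W: "card (path_End n) = card (W n)"
proof -
  let ?phi = "\<lambda>f. map (\<lambda>i. int (f i)) [1..<Suc n]"
  have inj: "inj_on ?phi (path_End n)"
  proof (rule inj_onI)
    fix f g assume f: "f \<in> path_End n" and g: "g \<in> path_End n" and e: "?phi f = ?phi g"
    show "f = g"
    proof (rule PiE_ext)
      show "f \<in> {1..n} \<rightarrow>\<^sub>E {1..n}" "g \<in> {1..n} \<rightarrow>\<^sub>E {1..n}" using f g by (auto simp: path_End_def)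
      fix i assume i: "i \<in> {1..n}"
      have "?phi f ! (i - 1) = ?phi g ! (i - 1)" by (simp only: e)
      with i show "f i = g i" using phi_nth[of i n f] phi_nth[of i n g] by simp
    qed
  qed
  have img: "?phi ` path_End n = W n"
  proof
    show "?phi ` path_End n \<subseteq> W n"
    proof
      fix ws assume "ws \<in> ?phi ` path_End n"
      then obtain f where f: "f \<in> path_End n" and ws: "ws = ?phi f" by blast
      have fr: "\<And>i. i \<in> {1..n} \<Longrightarrow> f i \<in> {1..n}" using f by (auto simp: path_End_def)
      have fa: "\<And>i. 1 \<le> i \<Longrightarrow> i \<le> n - 1 \<Longrightarrow> \<bar>int (f i) - int (f (i + 1))\<bar> = 1"
        using f by (auto simp: path_End_def)
      have "set ws \<subseteq> {1..int n}" using fr unfolding ws by force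
      moreover have "adj ws" unfolding adj_nth ws
      proof (intro allI impI)
        fix i assume "Suc i < length (?phi f)"
        then have "Suc i < n" by (simp del: upt_Suc)
        then show "\<bar>?phi f ! i - ?phi f ! Suc i\<bar> = 1" using fa[of "Suc i"] phi_nth[of "Suc i" n f] phi_nth[of "Suc (Suc i)" n f] by (simp del: upt_Suc)
      qed
      ultimately show "ws \<in> W n" unfolding W_def ws by simp
    qed
  next
    show "W n \<subseteq> ?phi ` path_End n"
    proof
      fix ws assume ws: "ws \<in> W n"
      let ?f = "\<lambda>i. if i \<in> {1..n} then nat (ws ! (i - 1)) else undefined"
      have len: "length ws = n" and st: "set ws \<subseteq> {1..int n}" and ad: "adj ws" using ws by (auto simp: W_def)
      have rng: "\<And>i. i < n \<Longrightarrow> 1 \<le> ws ! i \<and> ws ! i \<le> int n"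
        using st len nth_mem by fastforce
      have "?f \<in> path_End n"
        unfolding path_End_def
      proof (intro CollectI conjI allI impI)
        show "?f \<in> {1..n} \<rightarrow>\<^sub>E {1..n}"
        proof (rule PiE_I)
          fix i assume "i \<in> {1..n}"
          then have "i - 1 < n" by auto
          with rng[of "i-1"] show "?f i \<in> {1..n}" using \<open>i \<in> {1..n}\<close> by auto
        qed auto
      next
        fix i assume i: "1 \<le> i \<and> i \<le> n - 1"
        then have "Suc (i - 1) < length ws" using len by auto
        then have "\<bar>ws ! (i-1) - ws ! Suc (i-1)\<bar> = 1" using ad unfolding adj_nth by blast
        moreover have "Suc (i-1) = i" using i by auto
        ultimately show "\<bar>int (?f i) - int (?f (i + 1))\<bar> = 1"
          using i rng[of "i-1"] rng[of i] by auto
      qed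
      moreover have "?phi ?f = ws"
      proof (rule nth_equalityI)
        show "length (?phi ?f) = length ws" using len by simp
        fix i assume "i < length (?phi ?f)"
        then have "i < n" by (simp del: upt_Suc)
        then show "?phi ?f ! i = ws ! i" using rng[of i] phi_nth[of "Suc i" n ?f] by (simp del: upt_Suc)
      qed
      ultimately show "ws \<in> ?phi ` path_End n" by force
    qed
  qed
  show ?thesis using card_image[OF inj] img by simp
qed

definition Sg :: "nat \<Rightarrow> (int list \<times> int) set" where
  "Sg m = (SIGMA e:S m. {1 - mn e .. int (Suc m) - mx e})"

lemma card_W_Sg: "card (W (Suc m)) = card (Sg m)"
proof -
  let ?psi = "\<lambda>(e, s). walk s e"
  have inj: "inj_on ?psi (Sg m)"
    by (rule inj_onI) (auto dest: walk_inj)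
  have "?psi ` Sg m = W (Suc m)"
  proof
    show "?psi ` Sg m \<subseteq> W (Suc m)"
    proof
      fix ws assume "ws \<in> ?psi ` Sg m"
      then obtain e s where es: "(e, s) \<in> Sg m" and ws: "ws = walk s e" by auto
      from es have e: "set e \<subseteq> {-1,1}" "length e = m" "1 - mn e \<le> s" "s \<le> int (Suc m) - mx e"
        by (auto simp: Sg_def S_def)
      have "set ws \<subseteq> {1..int (Suc m)}" unfolding ws walk_set using e by simp
      then show "ws \<in> W (Suc m)" unfolding W_def ws using e by (simp add: length_walk walk_adj)
    qed
  next
    show "W (Suc m) \<subseteq> ?psi ` Sg m"
    proof
      fix ws assume ws: "ws \<in> W (Suc m)"
      then have ne: "ws \<noteq> []" and ad: "adj ws" and len: "length ws = Suc m"
        and st: "set ws \<subseteq> {1..int (Suc m)}" by (auto simp: W_def)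
      from dif_walk[OF ad ne] have w: "walk (hd ws) (dif ws) = ws"
        and d: "set (dif ws) \<subseteq> {-1,1}" "length (dif ws) = m" using len by auto
      have "set (walk (hd ws) (dif ws)) \<subseteq> {1..int (Suc m)}" using w st by simp
      then have "(dif ws, hd ws) \<in> Sg m" unfolding walk_set Sg_def S_def using d by auto
      then show "ws \<in> ?psi ` Sg m" using w by force
    qed
  qed
  then show ?thesis using card_image[OF inj] by simp
qed

lemma card_main: "int (card (path_End (Suc m))) = int (Suc m + 1) * 2^m - F m"
proof -
  have nn: "\<And>e. e \<in> S m \<Longrightarrow> 0 \<le> int (Suc m) - mx e + mn e"
  proof -
    fix e assume "e \<in> S m"
    then have "set e \<subseteq> {-1,1}" "length e = m" by (auto simp: S_def)
    moreover have "\<forall>x\<in>set e. \<bar>x\<bar> \<le> 1" using \<open>set e \<subseteq> {-1,1}\<close> by auto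
    ultimately have "mx e - mn e \<le> int m" using range_le[of e] by simp
    then show "0 \<le> int (Suc m) - mx e + mn e" by simp
  qed
  have "int (card (path_End (Suc m))) = int (card (Sg m))"
    using card_path_End_W card_W_Sg by simp
  also have "card (Sg m) = (\<Sum>e\<in>S m. card {1 - mn e .. int (Suc m) - mx e})"
    unfolding Sg_def by (rule card_SigmaI) (auto simp: finite_S)
  also have "int \<dots> = (\<Sum>e\<in>S m. int (Suc m) - mx e + mn e)"
    unfolding of_nat_sum by (rule sum.cong) (simp, use nn in force)
  also have "\<dots> = int (Suc m) * (\<Sum>e\<in>S m. 1) - D m + (\<Sum>e\<in>S m. mn e)"
    by (simp add: D_def sum.distrib sum_subtractf)
  also have "(\<Sum>e\<in>S m. mn e) = - D m"
  proof -
    have "(\<Sum>e\<in>S m. mn e) = (\<Sum>e\<in>S m. - mx (map uminus e))" by (simp add: mn_neg)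
    also have "\<dots> = - (\<Sum>e\<in>S m. mx (map uminus e))" by (simp add: sum_negf)
    also have "(\<Sum>e\<in>S m. mx (map uminus e)) = D m" unfolding D_def by (rule sum_S_neg[symmetric])
    finally show ?thesis .
  qed
  finally show ?thesis unfolding card_S F_def by (simp add: algebra_simps)
qed

theorem mainTheorem7:
  fixes n :: nat
  assumes "n \<ge> 1"
  shows "int (card (path_End n)) =
    (if odd n
     then int ((n + 1) * 2 ^ (n - 1)) - int (2 * n - 1) * int ((n - 1) choose ((n - 1) div 2))
     else int ((n + 1) * 2 ^ (n - 1)) - int n * int (n choose (n div 2)))"
proof -
  obtain m where n: "n = Suc m" using assms by (cases n) auto
  show ?thesis
  proof (cases "even m")
    case True
    then obtain j where m: "m = 2*j" by blast
    have "odd n" using n m by simp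
    then show ?thesis using card_main[of m] F_formula[of j] unfolding n m
      by (simp del: binomial_Suc_Suc add: algebra_simps)
  next
    case False
    then obtain j where m: "m = 2*j+1" using oddE by blast
    have "even n" "n div 2 = j+1" "n = 2*j+2" using n m by simp_all
    then show ?thesis using card_main[of m] F_formula[of j] unfolding n m
      by (simp del: binomial_Suc_Suc add: algebra_simps)
  qed
qed
end
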